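(* The following are theorems of $\mathbf{LEL}$ (for all $a\in\mathbf{A}$, variables $x,y$, $p\in\mathbf{P}$, formulas $\phi$, sentences $\alpha$, and strings $\vec{x}$ of variables and $\vec{a}$ of agents of equal length): (1) $[x:=a]\phi\leftrightarrow[y:=a]\phi[y/x]$, provided $y$ does not occur in $\phi$; (2) $[\vec{x}:=\vec{a}](\mathsf{K}_{\vec{x}}\alpha\to\mathsf{K}_{\vec{x}}[\vec{x}:=\vec{a}]\mathsf{K}_{\vec{x}}\alpha)$; (3) $[x:=a](\neg p_x\to\mathsf{K}_{x}[x:=a]\neg p_x)$.
   Context: Fix a nonempty finite set $\mathbf{A}$ of agents, a countable set $\mathbf{X}$ of variables disjoint from $\mathbf{A}$, and a countable set $\mathbf{P}$ of predicate letters. Formulas and free variables are defined simultaneously: $\phi ::= p_x \mid \top \mid \neg\phi \mid (\phi\wedge\phi) \mid [x:=a]\phi \mid \mathsf{K}_X\alpha$ ($p\in\mathbf{P}$, $x\in\mathbf{X}$, $a\in\mathbf{A}$, $X\subseteq\mathbf{X}$ finite possibly empty, $\alpha$ a formula with no free variables), $FV(p_x)=\{x\}$, $FV(\top)=\emptyset$, $FV(\neg\phi)=FV(\phi)$, $FV(\phi\wedge\psi)=FV(\phi)\cup FV(\psi)$, $FV([x:=a]\phi)=FV(\phi)\setminus\{x\}$, $FV(\mathsf{K}_X\alpha)=X$. Sentences are formulas without free variables. $\bot:=\neg\top$, other Booleans as usual, $\langle x:=a\rangle\phi:=\neg[x:=a]\neg\phi$, $\widehat{\mathsf{K}}_X\alpha:=\neg\mathsf{K}_X\neg\alpha$.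 $\phi[y/x]$ denotes the result of replacing all free occurrences of $x$ in $\phi$ by $y$ (including in the index sets $X$ of subformulas $\mathsf{K}_X\alpha$); it is admissible if $x$ has no free occurrence in $\phi$ within the scope of an operator $[y:=b]$, $b\in\mathbf{A}$. For $\vec{x}=x_1,\dots,x_n$ and $\vec{a}=a_1,\dots,a_n$, $[\vec{x}:=\vec{a}]\phi$ abbreviates $[x_1:=a_1]\cdots[x_n:=a_n]\phi$ (just $\phi$ if $n=0$), $\{\vec x\}=\{x_1,\dots,x_n\}$, $\{\vec a\}=\{a_1,\dots,a_n\}$, $\mathsf{K}_{\vec{x}}\alpha:=\mathsf{K}_{\{\vec{x}\}}\alpha$, and $\mathsf{K}_x:=\mathsf{K}_{\{x\}}$. The system $\mathbf{LEL}$ has axioms: all propositional tautologies; $\mathsf{K}_X(\alpha\to\beta)\to(\mathsf{K}_X\alpha\to\mathsf{K}_X\beta)$; $\mathsf{K}_X\alpha\to\mathsf{K}_Y\alpha$ for $X\subseteq Y$; $[x:=a](\phi\to\psi)\to([x:=a]\phi\to[x:=a]\psi)$; $\langle x:=a\rangle\phi\to[x:=a]\phi$; $\phi\to[x:=a]\phi$ for $x\notin FV(\phi)$; $[y:=a]([x:=a]\phi\to\phi[y/x])$ for admissible $\phi[y/x]$; $[x:=a][y:=b]\phi\to[y:=b][x:=a]\phi$ for $x\neq y$; $\bigwedge_{a\in\mathbf{A}}[x:=a]\phi\to\phi$; $\mathsf{K}_X\alpha\to\alpha$; $[\vec{x}:=\vec{a}](\neg\mathsf{K}_{\vec{x}}\alpha\to\mathsf{K}_{\vec{x}}[\vec{x}:=\vec{a}]\neg\mathsf{K}_{\vec{x}}\alpha)$;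 $[x:=a]\mathsf{K}_{x}\langle x:=a\rangle\top$; $[x:=a](p_x\to\mathsf{K}_{x}[x:=a]p_x)$; $[\vec{x}:=\vec{a}](\bigwedge_{b\in B}[x:=b]\bot\to\mathsf{K}_{\vec{x}}\bigwedge_{b\in B}[x:=b]\bot)$ where $B=\mathbf{A}\setminus\{\vec{a}\}$. Rules: modus ponens; from $\alpha$ infer $\mathsf{K}_\emptyset\alpha$ ($\alpha$ a sentence); from $\phi$ infer $[x:=a]\phi$. (Here $\alpha,\beta$ range over sentences, $\phi,\psi$ over formulas.) *)

theory Defs
  imports Main "HOL-Library.Countable"
begin

text \<open>Syntax of LEL. Agents 'a (finite nonempty type), variables 'v, predicate letters 'p.\<close>

datatype ('a, 'v, 'p) fm =
    Pred 'p 'v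
  | Top
  | Neg "('a, 'v, 'p) fm"
  | Conj "('a, 'v, 'p) fm" "('a, 'v, 'p) fm"
  | Assign 'v 'a "('a, 'v, 'p) fm"
  | Know "'v set" "('a, 'v, 'p) fm"

fun FV :: "('a, 'v, 'p) fm \<Rightarrow> 'v set" where
  "FV (Pred p x) = {x}"
| "FV Top = {}"
| "FV (Neg \<phi>) = FV \<phi>"
| "FV (Conj \<phi> \<psi>) = FV \<phi> \<union> FV \<psi>"
| "FV (Assign x a \<phi>) = FV \<phi> - {x}"
| "FV (Know X \<alpha>) = X"

fun wf :: "('a, 'v, 'p) fm \<Rightarrow> bool" where
  "wf (Pred p x) = True"
| "wf Top = True"
| "wf (Neg \<phi>) = wf \<phi>"
| "wf (Conj \<phi> \<psi>) = (wf \<phi> \<and> wf \<psi>)"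
| "wf (Assign x a \<phi>) = wf \<phi>"
| "wf (Know X \<alpha>) = (finite X \<and> wf \<alpha> \<and> FV \<alpha> = {})"

definition sentence :: "('a, 'v, 'p) fm \<Rightarrow> bool" where
  "sentence \<phi> \<longleftrightarrow> wf \<phi> \<and> FV \<phi> = {}"

fun vars :: "('a, 'v, 'p) fm \<Rightarrow> 'v set" where
  "vars (Pred p x) = {x}"
| "vars Top = {}"
| "vars (Neg \<phi>) = vars \<phi>"
| "vars (Conj \<phi> \<psi>) = vars \<phi> \<union> vars \<psi>"
| "vars (Assign x a \<phi>) = insert x (vars \<phi>)"
| "vars (Know X \<alpha>) = X \<union> vars \<alpha>"

text \<open>subst y x \<phi> is \<phi>[y/x]: replace free occurrences of x by y.\<close>
fun subst :: "'v \<Rightarrow> 'v \<Rightarrow> ('a, 'v, 'p) fm \<Rightarrow> ('a, 'v, 'p) fm" where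
  "subst y x (Pred p z) = Pred p (if z = x then y else z)"
| "subst y x Top = Top"
| "subst y x (Neg \<phi>) = Neg (subst y x \<phi>)"
| "subst y x (Conj \<phi> \<psi>) = Conj (subst y x \<phi>) (subst y x \<psi>)"
| "subst y x (Assign z a \<phi>) = (if z = x then Assign z a \<phi> else Assign z a (subst y x \<phi>))"
| "subst y x (Know X \<alpha>) = Know ((\<lambda>z. if z = x then y else z) ` X) \<alpha>"

text \<open>admissible y x \<phi>: x has no free occurrence in \<phi> within the scope of some [y:=b].\<close>
fun admissible :: "'v \<Rightarrow> 'v \<Rightarrow> ('a, 'v, 'p) fm \<Rightarrow> bool" where
  "admissible y x (Pred p z) = True"
| "admissible y x Top = True"
| "admissible y x (Neg \<phi>) = admissible y x \<phi>"
| "admissible y x (Conj \<phi> \<psi>) = (admissible y x \<phi> \<and> admissible y x \<psi>)"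
| "admissible y x (Assign z a \<phi>) =
     (if z = x then True else if z = y then x \<notin> FV \<phi> else admissible y x \<phi>)"
| "admissible y x (Know X \<alpha>) = True"

definition Bot :: "('a, 'v, 'p) fm" where "Bot = Neg Top"
definition Imp :: "('a, 'v, 'p) fm \<Rightarrow> ('a, 'v, 'p) fm \<Rightarrow> ('a, 'v, 'p) fm" where
  "Imp \<phi> \<psi> = Neg (Conj \<phi> (Neg \<psi>))"
definition Iff :: "('a, 'v, 'p) fm \<Rightarrow> ('a, 'v, 'p) fm \<Rightarrow> ('a, 'v, 'p) fm" where
  "Iff \<phi> \<psi> = Conj (Imp \<phi> \<psi>) (Imp \<psi> \<phi>)"
definition Dia :: "'v \<Rightarrow> 'a \<Rightarrow> ('a, 'v, 'p) fm \<Rightarrow> ('a, 'v, 'p) fm" where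
  "Dia x a \<phi> = Neg (Assign x a (Neg \<phi>))"

fun BigConj :: "('a, 'v, 'p) fm list \<Rightarrow> ('a, 'v, 'p) fm" where
  "BigConj [] = Top"
| "BigConj (\<phi> # \<phi>s) = Conj \<phi> (BigConj \<phi>s)"

text \<open>[xs := as] \<phi> = [x1:=a1]...[xn:=an]\<phi> (used only when lengths agree).\<close>
definition MAssign :: "'v list \<Rightarrow> 'a list \<Rightarrow> ('a, 'v, 'p) fm \<Rightarrow> ('a, 'v, 'p) fm" where
  "MAssign xs as \<phi> = foldr (\<lambda>(x, a) \<psi>. Assign x a \<psi>) (zip xs as) \<phi>"

text \<open>Propositional tautologies: valid under every truth assignment to the
  non-Boolean subformulas (atoms p_x, [x:=a]\<phi>, K_X \<alpha>).\<close>
fun tv :: "(('a, 'v, 'p) fm \<Rightarrow> bool) \<Rightarrow> ('a, 'v, 'p) fm \<Rightarrow> bool" where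
  "tv v Top = True"
| "tv v (Neg \<phi>) = (\<not> tv v \<phi>)"
| "tv v (Conj \<phi> \<psi>) = (tv v \<phi> \<and> tv v \<psi>)"
| "tv v \<phi> = v \<phi>"

definition taut :: "('a, 'v, 'p) fm \<Rightarrow> bool" where
  "taut \<phi> \<longleftrightarrow> (\<forall>v. tv v \<phi>)"

text \<open>Axiom schemes of LEL (sentence requirements on \<alpha>, \<beta> are enforced by wf of the instance).\<close>
inductive ax :: "('a::finite, 'v, 'p) fm \<Rightarrow> bool" where
  A_taut: "taut \<phi> \<Longrightarrow> ax \<phi>"
| A_Kdist: "ax (Imp (Know X (Imp \<alpha> \<beta>)) (Imp (Know X \<alpha>) (Know X \<beta>)))"
| A_Kmono: "X \<subseteq> Y \<Longrightarrow> ax (Imp (Know X \<alpha>) (Know Y \<alpha>))"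
| A_Adist: "ax (Imp (Assign x a (Imp \<phi> \<psi>)) (Imp (Assign x a \<phi>) (Assign x a \<psi>)))"
| A_func: "ax (Imp (Dia x a \<phi>) (Assign x a \<phi>))"
| A_vac: "x \<notin> FV \<phi> \<Longrightarrow> ax (Imp \<phi> (Assign x a \<phi>))"
| A_subst: "admissible y x \<phi> \<Longrightarrow> ax (Assign y a (Imp (Assign x a \<phi>) (subst y x \<phi>)))"
| A_comm: "x \<noteq> y \<Longrightarrow> ax (Imp (Assign x a (Assign y b \<phi>)) (Assign y b (Assign x a \<phi>)))"
| A_all: "set as = UNIV \<Longrightarrow> ax (Imp (BigConj (map (\<lambda>a. Assign x a \<phi>) as)) \<phi>)"
| A_T: "ax (Imp (Know X \<alpha>) \<alpha>)"
| A_neg: "length xs = length as \<Longrightarrow>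
    ax (MAssign xs as (Imp (Neg (Know (set xs) \<alpha>))
          (Know (set xs) (MAssign xs as (Neg (Know (set xs) \<alpha>))))))"
| A_self: "ax (Assign x a (Know {x} (Dia x a Top)))"
| A_pred: "ax (Assign x a (Imp (Pred p x) (Know {x} (Assign x a (Pred p x)))))"
| A_range: "length xs = length as \<Longrightarrow> set bs = UNIV - set as \<Longrightarrow>
    ax (MAssign xs as (Imp (BigConj (map (\<lambda>b. Assign x b Bot) bs))
          (Know (set xs) (BigConj (map (\<lambda>b. Assign x b Bot) bs)))))"

inductive LEL :: "('a::finite, 'v, 'p) fm \<Rightarrow> bool" where
  L_ax: "ax \<phi> \<Longrightarrow> wf \<phi> \<Longrightarrow> LEL \<phi>"
| L_mp: "LEL \<phi> \<Longrightarrow> LEL (Imp \<phi> \<psi>) \<Longrightarrow> LEL \<psi>"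
| L_nec: "LEL \<alpha> \<Longrightarrow> FV \<alpha> = {} \<Longrightarrow> LEL (Know {} \<alpha>)"
| L_gen: "LEL \<phi> \<Longrightarrow> LEL (Assign x a \<phi>)"

end

theory Submission
  imports Defs
begin

lemma LEL_wf: "LEL \<phi> \<Longrightarrow> wf \<phi>"
  by (induction rule: LEL.induct) (auto simp: Imp_def)

lemma taut_LEL: "taut \<phi> \<Longrightarrow> wf \<phi> \<Longrightarrow> LEL \<phi>"
  by (rule L_ax) (auto intro: A_taut)

lemma mp1: "LEL P \<Longrightarrow> taut (Imp P R) \<Longrightarrow> wf R \<Longrightarrow> LEL R"
  by (metis L_mp taut_LEL LEL_wf wf.simps(3,4) Imp_def)

lemma mp2: "LEL P \<Longrightarrow> LEL Q \<Longrightarrow> taut (Imp P (Imp Q R)) \<Longrightarrow> wf R \<Longrightarrow> LEL R"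
proof -
  assume a: "LEL P" "LEL Q" "taut (Imp P (Imp Q R))" "wf R"
  have "LEL (Imp P (Imp Q R))" using a by (intro taut_LEL) (auto simp: Imp_def dest!: LEL_wf)
  then have "LEL (Imp Q R)" using a L_mp by blast
  then show ?thesis using a L_mp by blast
qed

lemma imp_trans: "LEL (Imp P Q) \<Longrightarrow> LEL (Imp Q R) \<Longrightarrow> LEL (Imp P R)"
  by (rule mp2, assumption+) (auto simp: taut_def Imp_def dest!: LEL_wf)

lemma AssignK: "LEL (Imp A B) \<Longrightarrow> LEL (Imp (Assign x a A) (Assign x a B))"
proof -
  assume h: "LEL (Imp A B)"
  have w: "wf A" "wf B" using LEL_wf[OF h] by (auto simp: Imp_def)
  have "LEL (Assign x a (Imp A B))" using h by (rule L_gen)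
  moreover have "LEL (Imp (Assign x a (Imp A B)) (Imp (Assign x a A) (Assign x a B)))"
    using w by (intro L_ax A_Adist) (auto simp: Imp_def)
  ultimately show ?thesis using L_mp by blast
qed

lemma M_Cons[simp]: "MAssign (x # xs) (a # as) \<phi> = Assign x a (MAssign xs as \<phi>)"
  by (simp add: MAssign_def)

lemma M_Nil[simp]: "MAssign [] as \<phi> = \<phi>" "MAssign xs [] \<phi> = \<phi>"
  by (auto simp: MAssign_def)

lemma wf_M[simp]: "wf (MAssign xs as \<phi>) = wf \<phi>"
proof (induction xs arbitrary: as)
  case Nil then show ?case by simp
next
  case (Cons x xs) then show ?case by (cases as) auto
qed

lemma FV_M: "length xs = length as \<Longrightarrow> FV (MAssign xs as \<phi>) = FV \<phi> - set xs"
proof (induction xs arbitrary: as)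
  case Nil then show ?case by simp
next
  case (Cons x xs) then show ?case by (cases as) auto
qed

lemma Mgen: "LEL A \<Longrightarrow> LEL (MAssign xs as A)"
proof (induction xs arbitrary: as)
  case Nil then show ?case by simp
next
  case (Cons x xs) then show ?case by (cases as) (auto intro: L_gen)
qed

lemma Mdist: "wf A \<Longrightarrow> wf B \<Longrightarrow>
  LEL (Imp (MAssign xs as (Imp A B)) (Imp (MAssign xs as A) (MAssign xs as B)))"
proof (induction xs arbitrary: as)
  case Nil then show ?case by (intro taut_LEL) (auto simp: taut_def Imp_def)
next
  case (Cons x xs)
  show ?case
  proof (cases as)
    case Nil then show ?thesis using Cons by (intro taut_LEL) (auto simp: taut_def Imp_def)
  next
    case (Cons b bs)
    have 1: "LEL (Imp (Assign x b (MAssign xs bs (Imp A B))) (Assign x b (Imp (MAssign xs bs A) (MAssign xs bs B))))"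
      using Cons.IH Cons.prems by (intro AssignK) auto
    have 2: "LEL (Imp (Assign x b (Imp (MAssign xs bs A) (MAssign xs bs B))) (Imp (Assign x b (MAssign xs bs A)) (Assign x b (MAssign xs bs B))))"
      using Cons.prems by (intro L_ax A_Adist) (auto simp: Imp_def)
    show ?thesis using imp_trans[OF 1 2] Cons by simp
  qed
qed

lemma MK: "LEL (Imp A B) \<Longrightarrow> LEL (Imp (MAssign xs as A) (MAssign xs as B))"
proof -
  assume h: "LEL (Imp A B)"
  have w: "wf A" "wf B" using LEL_wf[OF h] by (auto simp: Imp_def)
  show ?thesis using Mgen[OF h, of xs as] Mdist[OF w, of xs as] L_mp by blast
qed

lemma Mcomb1: "LEL (MAssign xs as A) \<Longrightarrow> LEL (Imp A C) \<Longrightarrow> LEL (MAssign xs as C)"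
  using MK L_mp by blast

lemma Mcomb2: "LEL (MAssign xs as A) \<Longrightarrow> LEL (MAssign xs as B) \<Longrightarrow> LEL (Imp A (Imp B C))
   \<Longrightarrow> LEL (MAssign xs as C)"
proof -
  assume h: "LEL (MAssign xs as A)" "LEL (MAssign xs as B)" "LEL (Imp A (Imp B C))"
  have w: "wf B" "wf C" using LEL_wf[OF h(3)] by (auto simp: Imp_def)
  have "LEL (MAssign xs as (Imp B C))" using Mcomb1[OF h(1) h(3)] .
  then show ?thesis using Mdist[OF w, of xs as] h(2) L_mp by blast
qed

lemma Acomb1: "LEL (Assign x a A) \<Longrightarrow> LEL (Imp A C) \<Longrightarrow> LEL (Assign x a C)"
  using Mcomb1[of "[x]" "[a]"] by simp

lemma Acomb2: "LEL (Assign x a A) \<Longrightarrow> LEL (Assign x a B) \<Longrightarrow> LEL (Imp A (Imp B C))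
   \<Longrightarrow> LEL (Assign x a C)"
  using Mcomb2[of "[x]" "[a]"] by simp


lemma subst_same[simp]: "subst x x \<phi> = \<phi>"
  by (induction \<phi>) auto

lemma adm_same[simp]: "admissible x x \<phi>"
  by (induction \<phi>) auto

lemma taut_I: "taut \<phi> \<Longrightarrow> wf \<phi> \<Longrightarrow> LEL \<phi>" by (rule taut_LEL)

lemma vacM: "set xs \<inter> FV \<theta> = {} \<Longrightarrow> wf \<theta> \<Longrightarrow> LEL (Imp \<theta> (MAssign xs as \<theta>))"
proof (induction xs arbitrary: as)
  case Nil then show ?case by (intro taut_LEL) (auto simp: taut_def Imp_def)
next
  case (Cons x xs)
  show ?case
  proof (cases as)
    case Nil then show ?thesis using Cons by (intro taut_LEL) (auto simp: taut_def Imp_def)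
  next
    case (Cons b bs)
    have 1: "LEL (Imp \<theta> (Assign x b \<theta>))" using Cons.prems
      by (intro L_ax A_vac) (auto simp: Imp_def)
    have 2: "LEL (Imp (Assign x b \<theta>) (Assign x b (MAssign xs bs \<theta>)))"
      using Cons.IH Cons.prems by (intro AssignK) auto
    show ?thesis using imp_trans[OF 1 2] Cons by simp
  qed
qed

lemma idem: "length xs = length as \<Longrightarrow> wf \<psi> \<Longrightarrow>
  LEL (MAssign xs as (Imp (MAssign xs as \<psi>) \<psi>))"
proof (induction xs arbitrary: as)
  case Nil then show ?case by (intro taut_LEL) (auto simp: taut_def Imp_def)
next
  case (Cons x xs)
  then obtain b bs where as: "as = b # bs" "length xs = length bs" by (cases as) auto
  define \<rho> where "\<rho> = MAssign xs bs \<psi>"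
  define \<theta> where "\<theta> = Imp (Assign x b \<rho>) \<rho>"
  have w: "wf \<rho>" "wf \<theta>" using Cons.prems by (auto simp: \<rho>_def \<theta>_def Imp_def)
  have s1: "LEL (Assign x b \<theta>)"
    using A_subst[of x x \<rho> b] w unfolding \<theta>_def by (intro L_ax) (auto simp: Imp_def)
  have "FV \<theta> = FV \<psi> - set xs" using FV_M[OF as(2)] by (auto simp: \<theta>_def \<rho>_def Imp_def)
  then have "LEL (Imp \<theta> (MAssign xs bs \<theta>))" using w by (intro vacM) auto
  then have "LEL (Imp (Assign x b \<theta>) (Assign x b (MAssign xs bs \<theta>)))" by (rule AssignK)
  with s1 have s2: "LEL (MAssign (x#xs) as \<theta>)" using as L_mp by auto
  have s3: "LEL (MAssign (x#xs) as (Imp \<rho> \<psi>))"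
    using Cons.IH[OF as(2) Cons.prems(2)] as by (auto simp: \<rho>_def intro: L_gen)
  have s4: "LEL (Imp \<theta> (Imp (Imp \<rho> \<psi>) (Imp (Assign x b \<rho>) \<psi>)))"
    using w Cons.prems by (intro taut_LEL) (auto simp: taut_def Imp_def \<theta>_def)
  show ?case using Mcomb2[OF s2 s3 s4] as by (simp add: \<rho>_def)
qed

lemma part2:
  fixes \<alpha> :: "('a::finite, 'v, 'p) fm"
  assumes "sentence \<alpha>" "length xs = length as"
  shows "LEL (MAssign xs as (Imp (Know (set xs) \<alpha>)
                   (Know (set xs) (MAssign xs as (Know (set xs) \<alpha>)))))"
proof -
  define X where "X = set xs"
  define M where "M = (\<lambda>\<phi>::('a, 'v, 'p) fm. MAssign xs as \<phi>)"
  define K where "K = Know X \<alpha>"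
  define \<delta> where "\<delta> = M (Neg K)"
  have wa: "wf \<alpha>" "FV \<alpha> = {}" using assms(1) by (auto simp: sentence_def)
  have fX: "finite X" by (simp add: X_def)
  have FVM: "\<And>\<phi>. FV (M \<phi>) = FV \<phi> - X" using FV_M[OF assms(2)] by (simp add: M_def X_def)
  have wK: "wf K" using wa fX by (simp add: K_def)
  have FVd: "FV \<delta> = {}" and wd: "wf \<delta>" using FVM wK by (auto simp: \<delta>_def K_def M_def)
  have n1: "LEL (M (Imp (Neg K) (Know X \<delta>)))"
    using A_neg[OF assms(2), of \<alpha>] wa fX FVM wK FVd
    by (intro L_ax) (auto simp: M_def X_def K_def \<delta>_def Imp_def)
  have n2: "LEL (M (Imp (Neg (Know X \<delta>)) (Know X (M (Neg (Know X \<delta>))))))"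
    using A_neg[OF assms(2), of \<delta>] wd fX FVM FVd
    by (intro L_ax) (auto simp: M_def X_def Imp_def)
  have t: "LEL (M (Imp (Know X \<delta>) \<delta>))"
    unfolding M_def using wd fX FVd by (intro Mgen L_ax A_T) (auto simp: Imp_def)
  have id: "LEL (M (Imp \<delta> (Neg K)))"
    using idem[OF assms(2), of "Neg K"] wK by (simp add: M_def \<delta>_def)
  have tc1: "LEL (Imp (Imp (Know X \<delta>) \<delta>) (Imp (Imp \<delta> (Neg K)) (Imp K (Neg (Know X \<delta>)))))"
    using wK wd fX FVd by (intro taut_LEL) (auto simp: taut_def Imp_def)
  have c1: "LEL (M (Imp K (Neg (Know X \<delta>))))"
    using Mcomb2[OF t[unfolded M_def] id[unfolded M_def] tc1] by (simp add: M_def)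
  have tc2: "LEL (Imp (Imp (Neg K) (Know X \<delta>)) (Imp (Neg (Know X \<delta>)) K))"
    using wK wd fX FVd by (intro taut_LEL) (auto simp: taut_def Imp_def)
  have "LEL (M (Imp (Neg (Know X \<delta>)) K))"
    using Mcomb1[OF n1[unfolded M_def] tc2] by (simp add: M_def)
  then have i1: "LEL (Imp (M (Neg (Know X \<delta>))) (M K))" unfolding M_def
    using Mdist[of "Neg (Know X \<delta>)" K xs as] wK wd fX FVd L_mp by auto
  have "LEL (Know {} (Imp (M (Neg (Know X \<delta>))) (M K)))"
    using i1 FVM FVd by (intro L_nec) (auto simp: Imp_def K_def)
  moreover have "LEL (Imp (Know {} (Imp (M (Neg (Know X \<delta>))) (M K))) (Know X (Imp (M (Neg (Know X \<delta>))) (M K))))"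
    using LEL_wf[OF i1] FVM FVd fX by (intro L_ax A_Kmono) (auto simp: Imp_def K_def)
  ultimately have kk: "LEL (Know X (Imp (M (Neg (Know X \<delta>))) (M K)))" using L_mp by blast
  have "LEL (Imp (Know X (Imp (M (Neg (Know X \<delta>))) (M K)))
     (Imp (Know X (M (Neg (Know X \<delta>)))) (Know X (M K))))"
    using LEL_wf[OF i1] FVM FVd fX by (intro L_ax A_Kdist) (auto simp: Imp_def K_def)
  with kk have "LEL (Imp (Know X (M (Neg (Know X \<delta>)))) (Know X (M K)))" using L_mp by blast
  then have kd: "LEL (M (Imp (Know X (M (Neg (Know X \<delta>)))) (Know X (M K))))"
    unfolding M_def by (rule Mgen)
  have tc3: "LEL (Imp (Imp K (Neg (Know X \<delta>))) (Imp (Imp (Neg (Know X \<delta>)) (Know X (M (Neg (Know X \<delta>))))) (Imp K (Know X (M (Neg (Know X \<delta>)))))))"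
    using LEL_wf[OF n2] wK by (intro taut_LEL) (auto simp: taut_def Imp_def M_def)
  have c2: "LEL (M (Imp K (Know X (M (Neg (Know X \<delta>))))))"
    using Mcomb2[OF c1[unfolded M_def] n2[unfolded M_def] tc3[unfolded M_def]] by (simp add: M_def)
  have tc4: "LEL (Imp (Imp K (Know X (M (Neg (Know X \<delta>))))) (Imp (Imp (Know X (M (Neg (Know X \<delta>)))) (Know X (M K))) (Imp K (Know X (M K)))))"
    using LEL_wf[OF kd] wK by (intro taut_LEL) (auto simp: taut_def Imp_def M_def)
  have c3: "LEL (M (Imp K (Know X (M K))))"
    using Mcomb2[OF c2[unfolded M_def] kd[unfolded M_def] tc4[unfolded M_def]] by (simp add: M_def)
  then show ?thesis by (simp add: M_def K_def X_def)
qed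


lemma part3:
  fixes x :: 'v and a :: "'a::finite" and p :: 'p
  shows "LEL (Assign x a (Imp (Neg (Pred p x)) (Know {x} (Assign x a (Neg (Pred p x))))))"
proof -
  define P where "P = (Pred p x :: ('a, 'v, 'p) fm)"
  define AP where "AP = Assign x a P"
  define KA where "KA = Know {x} AP"
  define N where "N = Neg KA"
  have h1: "LEL (Assign x a (Imp AP P))"
    using A_subst[of x x P a] by (intro L_ax) (auto simp: AP_def P_def Imp_def)
  have h2: "LEL (Assign x a (Imp KA AP))"
    using A_T[of "{x}" AP] by (intro L_gen L_ax) (auto simp: KA_def AP_def P_def Imp_def)
  have h3: "LEL (Assign x a (Imp N (Know {x} (Assign x a N))))"
    using A_neg[of "[x]" "[a]" AP] by (intro L_ax) (auto simp: N_def KA_def AP_def P_def Imp_def)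
  have h4: "LEL (Assign x a (Imp P KA))"
    using A_pred[of x a p] by (intro L_ax) (auto simp: KA_def AP_def P_def Imp_def)
  have "LEL (Imp (Imp P KA) (Imp N (Neg P)))"
    by (intro taut_LEL) (auto simp: taut_def Imp_def N_def KA_def AP_def P_def)
  from Acomb1[OF h4 this] have "LEL (Assign x a (Imp N (Neg P)))" .
  then have i: "LEL (Imp (Assign x a N) (Assign x a (Neg P)))"
    using Mdist[of N "Neg P" "[x]" "[a]"] L_mp
    by (auto simp: N_def KA_def AP_def P_def)
  have "LEL (Know {} (Imp (Assign x a N) (Assign x a (Neg P))))"
    using i by (intro L_nec) (auto simp: Imp_def N_def KA_def AP_def P_def)
  moreover have "LEL (Imp (Know {} (Imp (Assign x a N) (Assign x a (Neg P)))) (Know {x} (Imp (Assign x a N) (Assign x a (Neg P)))))"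
    by (intro L_ax A_Kmono) (auto simp: Imp_def N_def KA_def AP_def P_def)
  ultimately have kk: "LEL (Know {x} (Imp (Assign x a N) (Assign x a (Neg P))))" using L_mp by blast
  have "LEL (Imp (Know {x} (Imp (Assign x a N) (Assign x a (Neg P))))
      (Imp (Know {x} (Assign x a N)) (Know {x} (Assign x a (Neg P)))))"
    by (intro L_ax A_Kdist) (auto simp: Imp_def N_def KA_def AP_def P_def)
  with kk have "LEL (Imp (Know {x} (Assign x a N)) (Know {x} (Assign x a (Neg P))))" using L_mp by blast
  then have h5: "LEL (Assign x a (Imp (Know {x} (Assign x a N)) (Know {x} (Assign x a (Neg P)))))"
    by (rule L_gen)
  define KN where "KN = Know {x} (Assign x a N)"
  define KNP where "KNP = Know {x} (Assign x a (Neg P))"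
  have "LEL (Imp (Imp AP P) (Imp (Imp KA AP) (Imp (Neg P) (Neg KA))))"
    by (intro taut_LEL) (auto simp: taut_def Imp_def N_def KA_def AP_def P_def)
  from Acomb2[OF h1 h2 this] have g1: "LEL (Assign x a (Imp (Neg P) N))" by (simp add: N_def)
  have "LEL (Imp (Imp (Neg P) N) (Imp (Imp N KN) (Imp (Neg P) KN)))"
    by (intro taut_LEL) (auto simp: taut_def Imp_def N_def KA_def AP_def P_def KN_def)
  from Acomb2[OF g1 h3[folded KN_def] this] have g2: "LEL (Assign x a (Imp (Neg P) KN))" .
  have "LEL (Imp (Imp (Neg P) KN) (Imp (Imp KN KNP) (Imp (Neg P) KNP)))"
    by (intro taut_LEL) (auto simp: taut_def Imp_def N_def KA_def AP_def P_def KN_def KNP_def)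
  from Acomb2[OF g2 h5[folded KN_def KNP_def] this] have "LEL (Assign x a (Imp (Neg P) KNP))" .
  then show ?thesis by (simp add: KNP_def P_def)
qed

lemma FV_vars: "FV \<phi> \<subseteq> vars \<phi>"
  by (induction \<phi>) auto

lemma wf_subst: "wf \<phi> \<Longrightarrow> wf (subst y x \<phi>)"
  by (induction \<phi>) auto

lemma FV_subst: "x \<noteq> y \<Longrightarrow> x \<notin> FV (subst y x \<phi>)"
  by (induction \<phi>) auto

lemma subst_novar: "x \<notin> vars \<phi> \<Longrightarrow> subst y x \<phi> = \<phi>"
  by (induction \<phi>) (auto simp: image_iff intro!: image_cong[OF refl, of _ _ id, simplified])

lemma subst_inv: "y \<notin> vars \<phi> \<Longrightarrow> subst x y (subst y x \<phi>) = \<phi>"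
proof (induction \<phi>)
  case (Know X \<alpha>)
  have "(\<lambda>z. if z = y then x else z) ` (\<lambda>z. if z = x then y else z) ` X = X"
    using Know.prems by (force simp: image_iff)
  then show ?case by simp
qed (auto simp: subst_novar)

lemma adm1: "y \<notin> vars \<phi> \<Longrightarrow> admissible y x \<phi>"
  by (induction \<phi>) auto

lemma adm2: "y \<notin> vars \<phi> \<Longrightarrow> admissible x y (subst y x \<phi>)"
  using FV_vars by (induction \<phi>) fastforce+

lemma fw:
  assumes "wf \<phi>" "admissible y x \<phi>" "y \<notin> FV (Assign x a \<phi>)"
  shows "LEL (Imp (Assign x a \<phi>) (Assign y a (subst y x \<phi>)))"
proof -
  have ws: "wf (subst y x \<phi>)" using wf_subst assms(1) .
  have 1: "LEL (Assign y a (Imp (Assign x a \<phi>) (subst y x \<phi>)))"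
    using A_subst[OF assms(2)] assms(1) ws by (intro L_ax) (auto simp: Imp_def)
  have 2: "LEL (Imp (Assign x a \<phi>) (Assign y a (Assign x a \<phi>)))"
    using A_vac[OF assms(3)] assms(1) by (intro L_ax) (auto simp: Imp_def)
  have 3: "LEL (Imp (Assign y a (Assign x a \<phi>)) (Assign y a (subst y x \<phi>)))"
    using Mdist[of "Assign x a \<phi>" "subst y x \<phi>" "[y]" "[a]"] 1 assms(1) ws L_mp by auto
  show ?thesis using imp_trans[OF 2 3] .
qed

lemma part1:
  assumes "wf \<phi>" "y \<notin> vars \<phi>"
  shows "LEL (Iff (Assign x a \<phi>) (Assign y a (subst y x \<phi>)))"
proof -
  have 1: "LEL (Imp (Assign x a \<phi>) (Assign y a (subst y x \<phi>)))"
    using assms FV_vars[of \<phi>] by (intro fw adm1) auto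
  have "x \<notin> FV (Assign y a (subst y x \<phi>))"
    using FV_subst[of x y \<phi>] by (cases "x = y") auto
  then have "LEL (Imp (Assign y a (subst y x \<phi>)) (Assign x a (subst x y (subst y x \<phi>))))"
    using assms by (intro fw wf_subst adm2) auto
  then have 2: "LEL (Imp (Assign y a (subst y x \<phi>)) (Assign x a \<phi>))"
    using subst_inv[OF assms(2)] by simp
  have "taut (Imp (Imp (Assign x a \<phi>) (Assign y a (subst y x \<phi>))) (Imp (Imp (Assign y a (subst y x \<phi>)) (Assign x a \<phi>)) (Iff (Assign x a \<phi>) (Assign y a (subst y x \<phi>)))))"
    by (auto simp: taut_def Iff_def Imp_def)
  from mp2[OF 1 2 this] show ?thesis using LEL_wf[OF 1] by (auto simp: Iff_def Imp_def)
qed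

theorem proposition5:
  fixes a :: "'a::finite" and x y :: "'v::countable" and p :: "'p::countable"
    and \<phi> \<alpha> :: "('a, 'v, 'p) fm" and xs :: "'v list" and as :: "'a list"
  shows "(wf \<phi> \<and> y \<notin> vars \<phi> \<longrightarrow> LEL (Iff (Assign x a \<phi>) (Assign y a (subst y x \<phi>))))
       \<and> (sentence \<alpha> \<and> length xs = length as \<longrightarrow>
            LEL (MAssign xs as (Imp (Know (set xs) \<alpha>)
                   (Know (set xs) (MAssign xs as (Know (set xs) \<alpha>))))))
       \<and> LEL (Assign x a (Imp (Neg (Pred p x)) (Know {x} (Assign x a (Neg (Pred p x))))))"
  using part1[of \<phi> y x a] part2[of \<alpha> xs as] part3[of x a p] by blast

end
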